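(* Let $\delta$ be a positive integer, let $G$ be a graph on $n$ vertices with minimum degree at least $\delta$, and let $x>0$ be fixed. Define $$C_x=\frac{\ln(1+x)}{\ln(1+x)-\frac{x}{1+x}},\qquad D_x=\frac{2\ln\left(\frac{x}{1+x}\right)}{\ln(1+x)}.$$ If $$n\ge (C_x-1)\delta^2+((1-D_x)C_x+1+D_x)\delta-D_x,$$ then either $G=K_{\delta,n-\delta}$ or $P(G,x)<P(K_{\delta,n-\delta},x)$.
   Context: Graphs are simple, loopless and finite. For a graph $G$, $i_t(G)$ is the number of independent sets of size $t$ in $G$ (with $i_0(G)=1$), and the independent set polynomial is $P(G,x)=\sum_{t\ge 0} i_t(G)x^t$. $K_{a,b}$ is the complete bipartite graph with $a$ vertices in one part and $b$ in the other. *)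

theory Defs
  imports Complex_Main
begin

definition simple_graph :: "'a set \<Rightarrow> ('a \<Rightarrow> 'a \<Rightarrow> bool) \<Rightarrow> bool" where
  "simple_graph V E \<longleftrightarrow> finite V \<and> (\<forall>u v. E u v \<longrightarrow> E v u)
     \<and> (\<forall>v. \<not> E v v) \<and> (\<forall>u v. E u v \<longrightarrow> u \<in> V \<and> v \<in> V)"

definition degree :: "'a set \<Rightarrow> ('a \<Rightarrow> 'a \<Rightarrow> bool) \<Rightarrow> 'a \<Rightarrow> nat" where
  "degree V E v = card {u \<in> V. E v u}"

definition min_degree_ge :: "'a set \<Rightarrow> ('a \<Rightarrow> 'a \<Rightarrow> bool) \<Rightarrow> nat \<Rightarrow> bool" where
  "min_degree_ge V E d \<longleftrightarrow> (\<forall>v\<in>V. degree V E v \<ge> d)"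

definition independent_set :: "'a set \<Rightarrow> ('a \<Rightarrow> 'a \<Rightarrow> bool) \<Rightarrow> 'a set \<Rightarrow> bool" where
  "independent_set V E S \<longleftrightarrow> S \<subseteq> V \<and> (\<forall>u\<in>S. \<forall>v\<in>S. \<not> E u v)"

definition num_indep :: "'a set \<Rightarrow> ('a \<Rightarrow> 'a \<Rightarrow> bool) \<Rightarrow> nat \<Rightarrow> nat" where
  "num_indep V E t = card {S. independent_set V E S \<and> card S = t}"

text \<open>Independent set polynomial P(G,x) = sum_t i_t(G) x^t (terms with t > |V| vanish).\<close>
definition indep_poly :: "'a set \<Rightarrow> ('a \<Rightarrow> 'a \<Rightarrow> bool) \<Rightarrow> real \<Rightarrow> real" where
  "indep_poly V E x = (\<Sum>t\<le>card V. real (num_indep V E t) * x ^ t)"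

text \<open>Complete bipartite graph K_{a,b} on vertex set {0..<a+b}, parts {0..<a} and {a..<a+b}.\<close>
definition Kab_verts :: "nat \<Rightarrow> nat \<Rightarrow> nat set" where
  "Kab_verts a b = {0..<a+b}"

definition Kab_edge :: "nat \<Rightarrow> nat \<Rightarrow> nat \<Rightarrow> nat \<Rightarrow> bool" where
  "Kab_edge a b u v \<longleftrightarrow> u < a + b \<and> v < a + b \<and> ((u < a) \<noteq> (v < a))"

definition graph_iso :: "'a set \<Rightarrow> ('a \<Rightarrow> 'a \<Rightarrow> bool) \<Rightarrow> 'b set \<Rightarrow> ('b \<Rightarrow> 'b \<Rightarrow> bool) \<Rightarrow> bool" where
  "graph_iso V E W F \<longleftrightarrow> (\<exists>f. bij_betw f V W \<and> (\<forall>u\<in>V. \<forall>v\<in>V. E u v \<longleftrightarrow> F (f u) (f v)))"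

definition C_const :: "real \<Rightarrow> real" where
  "C_const x = ln (1 + x) / (ln (1 + x) - x / (1 + x))"

definition D_const :: "real \<Rightarrow> real" where
  "D_const x = 2 * ln (x / (1 + x)) / ln (1 + x)"

end

theory Submission
  imports Defs
begin

lemma ln_upper2:
  fixes x :: real assumes "x \<ge> 0"
  shows "2*(1+x)*ln (1+x) \<le> x*(2+x)"
proof -
  let ?f = "\<lambda>t::real. t*(2+t) - 2*(1+t)*ln (1+t)"
  have "?f 0 \<le> ?f x"
  proof (rule DERIV_nonneg_imp_nondecreasing[OF assms])
    fix t :: real assume t: "0 \<le> t" "t \<le> x"
    have "DERIV ?f t :> (2+2*t) - (2*ln(1+t) + 2*(1+t)*(1/(1+t)))"
      using t by (auto intro!: derivative_eq_intros)
    moreover have "(2+2*t) - (2*ln(1+t) + 2*(1+t)*(1/(1+t))) = 2*(t - ln(1+t))"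
      using t by (simp add: field_simps)
    moreover have "ln (1+t) \<le> t" using t ln_add_one_self_le_self by blast
    ultimately show "\<exists>y. DERIV ?f t :> y \<and> y \<ge> 0" by auto
  qed
  then show ?thesis by simp
qed

lemma C_bound:
  fixes x :: real assumes "x > 0"
  shows "C_const x - 1 \<ge> 2/x"
proof -
  obtain y where y: "y = 1 + x" by blast
  have ypos: "y > 0" using y assms by simp
  let ?L = "ln y"
  have gt: "?L > x/y" using ln_add1_gt[of x] assms y by (simp add: add.commute)
  have up: "2*y*?L \<le> x*(2+x)" using ln_upper2[of x] assms y by simp
  have eq: "x^2/(2*y) - (?L - x/y) = (x*(2+x) - 2*y*?L)/(2*y)"
    using ypos by (simp add: field_simps power2_eq_square)
  have "(x*(2+x) - 2*y*?L)/(2*y) \<ge> 0" using up ypos by simp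
  then have le: "?L - x/y \<le> x^2/(2*y)" using eq by linarith
  have pos: "?L - x/y > 0" using gt by simp
  have "2/x \<le> (x/y) / (x^2/(2*y))"
    using assms ypos by (simp add: field_simps power2_eq_square)
  also have "\<dots> \<le> (x/y) / (?L - x/y)"
    using le pos assms ypos by (intro divide_left_mono) auto
  also have "\<dots> = C_const x - 1"
    using pos y unfolding C_const_def by (simp add: field_simps)
  finally show ?thesis .
qed

lemma D_bound:
  fixes x :: real assumes "x > 0"
  shows "- D_const x \<ge> 2/(x*(1+x))"
proof -
  let ?L = "ln (1+x)"
  have Lpos: "?L > 0" using assms by simp
  have Lle: "?L \<le> x" using ln_add_one_self_le_self assms by simp
  have "ln ((1+x)/x) \<ge> 1/(1+x)"
  proof -
    have "ln (x/(1+x)) \<le> x/(1+x) - 1" using ln_le_minus_one assms by simp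
    moreover have "ln ((1+x)/x) = - ln (x/(1+x))" using assms by (simp add: ln_div)
    moreover have "x/(1+x) - 1 = - (1/(1+x))" using assms by (simp add: field_simps)
    ultimately show ?thesis by linarith
  qed
  have "- D_const x = 2 * ln ((1+x)/x) / ?L"
    unfolding D_const_def using assms Lpos by (simp add: ln_div divide_simps)
  also have "\<dots> \<ge> 2 * (1/(1+x)) / x"
    using \<open>ln ((1+x)/x) \<ge> 1/(1+x)\<close> Lpos Lle assms
    by (intro frac_le) auto
  finally show ?thesis by (simp add: field_simps)
qed

lemma g_via_i:
  fixes p m d :: real
  assumes "m \<ge> 0" "d \<ge> 0" "0 < p" "p < 1"
    and "p^2*m \<ge> p^2 + 2*p + d*(1-p)*(1+p)"
  shows "2 + m*(m-1)*p^2 - 2*m*p - d*(m-1)*(1-p^2) + 2*d*(1-p) > 0"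
proof -
  have e: "2 + m*(m-1)*p^2 - 2*m*p - d*(m-1)*(1-p^2) + 2*d*(1-p)
     = m*(p^2*m - (p^2 + 2*p + d*(1-p)*(1+p))) + (2 + d*(1-p)*(3+p))"
    by (simp add: algebra_simps power2_eq_square)
  have "m*(p^2*m - (p^2 + 2*p + d*(1-p)*(1+p))) \<ge> 0" using assms by simp
  moreover have "d*(1-p)*(3+p) \<ge> 0" using assms by simp
  ultimately show ?thesis using e by linarith
qed

lemma g_via_ii:
  fixes p m d :: real
  assumes "m \<ge> 3" "2 - 2*p*(1-p)*(3+d) > 0"
    and "p^2*(m+2) - 2*p - d*(1-p)*(1+p) \<ge> 0"
  shows "2 + m*(m-1)*p^2 - 2*m*p - d*(m-1)*(1-p^2) + 2*d*(1-p) > 0"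
proof -
  have e: "2 + m*(m-1)*p^2 - 2*m*p - d*(m-1)*(1-p^2) + 2*d*(1-p)
     = (2 - 2*p*(1-p)*(3+d)) + (m-3)*(p^2*(m+2) - 2*p - d*(1-p)*(1+p))"
    by (simp add: algebra_simps power2_eq_square)
  have "(m-3)*(p^2*(m+2) - 2*p - d*(1-p)*(1+p)) \<ge> 0" using assms by simp
  then show ?thesis using e assms by linarith
qed

lemma g_pos:
  fixes p m :: real and d :: nat
  assumes p0: "0<p" and p1: "p<1" and d1: "d \<ge> 1" and m3: "m \<ge> 3"
    and hR: "p^2*m \<ge> 2*(1-p)*p*(real d)^2 + (2*(1-p)+p)*p*d + 4*(1-p)^3*d + 2*(1-p)^2*p"
  shows "2 + m*(m-1)*p^2 - 2*m*p - real d*(m-1)*(1-p^2) + 2*real d*(1-p) > 0"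
proof -
  define q where "q = 1 - p"
  have pq: "p = 1 - q" using q_def by simp
  have q0: "q > 0" "q < 1" using p0 p1 q_def by auto
  let ?R = "2*(1-p)*p*(real d)^2 + (2*(1-p)+p)*p*d + 4*(1-p)^3*d + 2*(1-p)^2*p"
  have Rdiff: "?R - (p^2 + 2*p + d*(1-p)*(1+p))
      = 2*p*q*(real d)^2 + d*(p^2 - q^2 + 4*q^3) + 2*p*q^2 - p^2 - 2*p"
    unfolding q_def by (simp add: algebra_simps power2_eq_square power3_eq_cube)
  have dr: "real d \<ge> 1" using d1 by simp
  show ?thesis
  proof (cases "p \<le> 1/2")
    case True
    then have qh: "q \<ge> 1/2" using q_def by simp
    have c0: "p^2 - q^2 + 4*q^3 \<ge> 0"
    proof -
      have "4*q^3 - q^2 = q^2*(4*q - 1)" by (simp add: algebra_simps power2_eq_square power3_eq_cube)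
      moreover have "q^2*(4*q-1) \<ge> 0" using qh by simp
      moreover have "p^2 \<ge> 0" by simp
      ultimately show ?thesis by linarith
    qed
    have t1: "2*p*q*(real d)^2 \<ge> 2*p*q"
    proof -
      have "real d^2 \<ge> 1" using dr by (simp add: one_le_power)
      then have "2*p*q*(real d)^2 \<ge> 2*p*q*1" using p0 q0 by (intro mult_left_mono) auto
      then show ?thesis by simp
    qed
    have t2': "d*(p^2 - q^2 + 4*q^3) \<ge> 1*(p^2 - q^2 + 4*q^3)" using dr c0
      by (intro mult_right_mono) auto
    then have t2: "d*(p^2 - q^2 + 4*q^3) \<ge> p^2 - q^2 + 4*q^3" by simp
    have t3: "2*p*q + (p^2 - q^2 + 4*q^3) + 2*p*q^2 - p^2 - 2*p = (2*q-1)*(q^2+2)"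
      unfolding pq by (simp add: algebra_simps power2_eq_square power3_eq_cube)
    have "(2*q-1)*(q^2+2) \<ge> 0" using qh by simp
    then have "?R - (p^2 + 2*p + d*(1-p)*(1+p)) \<ge> 0" using Rdiff t1 t2 t3 by linarith
    then show ?thesis using hR p0 p1 m3 by (intro g_via_i) auto
  next
    case False
    then have ph: "p > 1/2" by simp
    then have qh: "q < 1/2" using q_def by simp
    consider "d = 1" | "d = 2" | "d \<ge> 3" using d1 by linarith
    then show ?thesis
    proof cases
      case 1
      have g3: "2 - 2*p*(1-p)*(3+real d) > 0"
      proof -
        have "p*(1-p) = 1/4 - (p - 1/2)^2" by (simp add: algebra_simps power2_eq_square)
        moreover have "(p-1/2)^2 > 0" using ph by simp
        ultimately have "p*(1-p) < 1/4" by linarith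
        then show ?thesis using 1 by simp
      qed
      have K: "p^2*(m+2) - 2*p - real d*(1-p)*(1+p) \<ge> 0"
      proof (cases "p \<ge> 5/8")
        case True
        have "p^2*(m+2) \<ge> p^2*5" using m3 by (intro mult_left_mono) auto
        moreover have "6*p^2 - 2*p - 1 \<ge> 0"
        proof -
          have "6*p^2 - 2*p - 1 = (p - 5/8)*(6*p + 7/4) + 3/32"
            by (simp add: algebra_simps power2_eq_square)
          moreover have "(p - 5/8)*(6*p + 7/4) \<ge> 0" using True by simp
          ultimately show ?thesis by linarith
        qed
        ultimately show ?thesis using 1 by (simp add: algebra_simps power2_eq_square)
      next
        case False
        have "p^2*(m+2) - 2*p - real d*(1-p)*(1+p) \<ge> ?R + 2*p^2 - 2*p - (1-p)*(1+p)"
          using hR 1 by (simp add: algebra_simps)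
        moreover have "?R + 2*p^2 - 2*p - (1-p)*(1+p) = (p - q) + 4*q^3 + 2*p*q^2"
          using 1 unfolding pq by (simp add: algebra_simps power2_eq_square power3_eq_cube)
        moreover have "(p - q) + 4*q^3 + 2*p*q^2 \<ge> 0" using ph qh q0 p0 by simp
        ultimately show ?thesis by linarith
      qed
      show ?thesis by (rule g_via_ii[OF m3 g3 K])
    next
      case 2
      show ?thesis
      proof (cases "p \<le> 3/4")
        case True
        have "?R - (p^2 + 2*p + d*(1-p)*(1+p)) = -1 + 8*q - 7*q^2 + 6*q^3"
          using 2 unfolding pq by (simp add: algebra_simps power2_eq_square power3_eq_cube)
        moreover have "-1 + 8*q - 7*q^2 + 6*q^3 \<ge> 0"
        proof -
          have qq: "q \<ge> 1/4" using True q_def by simp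
          have e1: "8*q - 7*q^2 = q*(8 - 7*q)" by (simp add: algebra_simps power2_eq_square)
          have "q*(8-7*q) \<ge> (1/4)*(8 - 7*(1/2))"
            using qq qh by (intro mult_mono) auto
          then have "8*q - 7*q^2 \<ge> 9/8" using e1 by simp
          moreover have "6*q^3 \<ge> 0" using q0 by simp
          ultimately show ?thesis by linarith
        qed
        ultimately show ?thesis using hR p0 p1 m3 by (intro g_via_i) auto
      next
        case False
        have g3: "2 - 2*p*(1-p)*(3+real d) > 0"
        proof -
          have "p*(1-p) = 1/4 - (p - 1/2)^2" by (simp add: algebra_simps power2_eq_square)
          moreover have "(p - 1/2)^2 \<ge> (1/4)^2" using False by (intro power_mono) auto
          ultimately have "p*(1-p) \<le> 3/16" by (simp add: power2_eq_square)
          then show ?thesis using 2 by simp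
        qed
        have K: "p^2*(m+2) - 2*p - real d*(1-p)*(1+p) \<ge> 0"
        proof -
          have "p^2*(m+2) \<ge> p^2*5" using m3 by (intro mult_left_mono) auto
          moreover have "7*p^2 - 2*p - 2 \<ge> 0"
          proof -
            have "7*p^2 - 2*p - 2 = (p - 3/4)*(7*p + 13/4) + 7/16"
              by (simp add: field_simps power2_eq_square)
            moreover have "(p - 3/4)*(7*p + 13/4) \<ge> 0" using False by simp
            ultimately show ?thesis by linarith
          qed
          ultimately show ?thesis using 2 by (simp add: algebra_simps power2_eq_square)
        qed
        show ?thesis by (rule g_via_ii[OF m3 g3 K])
      qed
    next
      case 3
      have dr3: "real d \<ge> 3" using 3 by simp
      have c0: "p^2 - q^2 + 4*q^3 \<ge> 0"
      proof -
        have "p^2 - q^2 = (p-q)*(p+q)" by (simp add: algebra_simps power2_eq_square)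
        moreover have "(p-q)*(p+q) \<ge> 0" using ph qh q0 p0 by simp
        moreover have "q^3 \<ge> 0" using q0 by simp
        ultimately show ?thesis by linarith
      qed
      have t1: "2*p*q*(real d)^2 \<ge> 2*p*q*9"
      proof -
        have "real d^2 \<ge> 3^2" using dr3 by (intro power_mono) auto
        then show ?thesis using p0 q0 by (intro mult_left_mono) auto
      qed
      have t2: "d*(p^2 - q^2 + 4*q^3) \<ge> 3*(p^2 - q^2 + 4*q^3)" using dr3 c0
        by (intro mult_right_mono) auto
      have t3: "2*p*q*9 + 3*(p^2 - q^2 + 4*q^3) + 2*p*q^2 - p^2 - 2*p = q*(16 - 17*q + 10*q^2)"
        unfolding pq by (simp add: algebra_simps power2_eq_square power3_eq_cube)
      have "16 - 17*q + 10*q^2 \<ge> 0"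
      proof -
        have "16 - 17*q + 10*q^2 = 10*(q - 17/20)^2 + (16 - 289/40)" by (simp add: algebra_simps power2_eq_square)
        moreover have "(q - 17/20)^2 \<ge> 0" by simp
        ultimately show ?thesis by linarith
      qed
      then have "q*(16 - 17*q + 10*q^2) \<ge> 0" using q0 by simp
      then have "?R - (p^2 + 2*p + d*(1-p)*(1+p)) \<ge> 0" using Rdiff t1 t2 t3 by linarith
      then show ?thesis using hR p0 p1 m3 by (intro g_via_i) auto
    qed
  qed
qed

lemma binom_sum: "(\<Sum>t\<le>N. real (N choose t) * x^t) = (1+x)^N"
  using binomial_ring[of x 1 N] by (simp add: add.commute)

lemma regroup: "(a::real) * b = c \<Longrightarrow> a * s * b * y = c * (s * y)"
  by (simp add: algebra_simps)

lemma M1: "(\<Sum>t\<le>Suc N. real t * real (Suc N choose t) * x^t) = real (Suc N) * x * (1+x)^N"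
proof -
  have "(\<Sum>t\<le>Suc N. real t * real (Suc N choose t) * x^t)
      = (\<Sum>s\<le>N. real (Suc s) * real (Suc N choose Suc s) * x^(Suc s))"
    by (subst sum.atMost_Suc_shift) simp
  also have "\<dots> = (\<Sum>s\<le>N. real (Suc N) * x * (real (N choose s) * x^s))"
  proof (rule sum.cong[OF refl])
    fix s
    have "real (Suc s) * real (Suc N choose Suc s) = real (Suc N) * real (N choose s)"
      using Suc_times_binomial[of s N] by (metis of_nat_mult)
    then show "real (Suc s) * real (Suc N choose Suc s) * x^(Suc s) = real (Suc N) * x * (real (N choose s) * x^s)"
      by (simp add: algebra_simps del: binomial_Suc_Suc)
  qed
  also have "\<dots> = real (Suc N) * x * (1+x)^N"
    by (simp add: sum_distrib_left[symmetric] binom_sum)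
  finally show ?thesis .
qed

lemma M2: "(\<Sum>t\<le>Suc (Suc N). real t * (real t - 1) * real (Suc (Suc N) choose t) * x^t)
   = real (Suc (Suc N)) * real (Suc N) * x^2 * (1+x)^N"
proof -
  have "(\<Sum>t\<le>Suc (Suc N). real t * (real t - 1) * real (Suc (Suc N) choose t) * x^t)
      = (\<Sum>s\<le>Suc N. real (Suc s) * real s * real (Suc (Suc N) choose Suc s) * x^(Suc s))"
    by (subst sum.atMost_Suc_shift) simp
  also have "\<dots> = (\<Sum>s\<le>Suc N. real (Suc (Suc N)) * x * (real s * real (Suc N choose s) * x^s))"
  proof (rule sum.cong[OF refl])
    fix s
    have "real (Suc s) * real (Suc (Suc N) choose Suc s) = real (Suc (Suc N)) * real (Suc N choose s)"
      using Suc_times_binomial[of s "Suc N"] by (metis of_nat_mult)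
    then have "real (Suc s) * real s * real (Suc (Suc N) choose Suc s) * x^(Suc s) = (real (Suc (Suc N)) * real (Suc N choose s)) * (real s * x^(Suc s))"
      by (rule regroup)
    then show "real (Suc s) * real s * real (Suc (Suc N) choose Suc s) * x^(Suc s) = real (Suc (Suc N)) * x * (real s * real (Suc N choose s) * x^s)"
      by (simp add: algebra_simps del: binomial_Suc_Suc)
  qed
  also have "\<dots> = real (Suc (Suc N)) * x * (real (Suc N) * x * (1+x)^N)"
    by (simp only: sum_distrib_left[symmetric] M1)
  finally show ?thesis by (simp add: power2_eq_square algebra_simps)
qed

lemma Phi: "real (Suc N) * (\<Sum>s\<le>N. real (N choose s) * x^(Suc s) / real (Suc s)) = (1+x)^(Suc N) - 1"
proof -
  have "real (Suc N) * (\<Sum>s\<le>N. real (N choose s) * x^(Suc s) / real (Suc s))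
     = (\<Sum>s\<le>N. real (Suc N choose Suc s) * x^(Suc s))"
    unfolding sum_distrib_left
  proof (rule sum.cong[OF refl])
    fix s
    have "real (Suc N) * real (N choose s) = real (Suc N choose Suc s) * real (Suc s)"
      using Suc_times_binomial_eq[of N s] by (metis of_nat_mult)
    then show "real (Suc N) * (real (N choose s) * x^(Suc s) / real (Suc s)) = real (Suc N choose Suc s) * x^(Suc s)"
      by (simp add: field_simps del: of_nat_Suc binomial_Suc_Suc)
  qed
  also have "\<dots> = (\<Sum>t\<le>Suc N. real (Suc N choose t) * x^t) - 1"
    by (simp only: sum.atMost_Suc_shift) simp
  also have "\<dots> = (1+x)^(Suc N) - 1" by (simp add: binom_sum)
  finally show ?thesis .
qed

lemma choose3: "(Suc k) * (Suc (Suc k)) * (Suc (Suc (Suc k))) * (k choose s)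
   = (Suc (Suc (Suc k)) choose Suc (Suc (Suc s))) * (Suc s) * (Suc (Suc s)) * (Suc (Suc (Suc s)))"
proof -
  have a: "Suc k * (k choose s) = (Suc k choose Suc s) * Suc s" by (rule Suc_times_binomial_eq)
  have b: "Suc (Suc k) * (Suc k choose Suc s) = (Suc (Suc k) choose Suc (Suc s)) * Suc (Suc s)" by (rule Suc_times_binomial_eq)
  have c: "Suc (Suc (Suc k)) * (Suc (Suc k) choose Suc (Suc s)) = (Suc (Suc (Suc k)) choose Suc (Suc (Suc s))) * Suc (Suc (Suc s))" by (rule Suc_times_binomial_eq)
  have "(Suc k) * (Suc (Suc k)) * (Suc (Suc (Suc k))) * (k choose s)
      = Suc (Suc (Suc k)) * (Suc (Suc k) * (Suc k * (k choose s)))" by (simp only: ac_simps)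
  also have "\<dots> = Suc (Suc (Suc k)) * (Suc (Suc k) * (Suc k choose Suc s)) * Suc s" by (simp only: a ac_simps)
  also have "\<dots> = Suc (Suc (Suc k)) * (Suc (Suc k) choose Suc (Suc s)) * Suc (Suc s) * Suc s" by (simp only: b ac_simps)
  also have "\<dots> = (Suc (Suc (Suc k)) choose Suc (Suc (Suc s))) * Suc (Suc (Suc s)) * Suc (Suc s) * Suc s" by (simp only: c ac_simps)
  finally show ?thesis by (simp only: ac_simps)
qed

lemma Psi: "real ((Suc k) * (Suc (Suc k)) * (Suc (Suc (Suc k)))) * (\<Sum>s\<le>k. real (k choose s) * x^(s+3) / real (s+3))
  = real (Suc (Suc (Suc k))) * real (Suc (Suc k)) * x^2 * (1+x)^(Suc k)
    - 2 * real (Suc (Suc (Suc k))) * x * (1+x)^(Suc (Suc k)) + 2 * (1+x)^(Suc (Suc (Suc k))) - 2"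
proof -
  let ?K = "Suc (Suc (Suc k))"
  let ?f = "\<lambda>t. (real t - 1) * (real t - 2) * real (?K choose t) * x^t"
  have "real ((Suc k) * (Suc (Suc k)) * ?K) * (\<Sum>s\<le>k. real (k choose s) * x^(s+3) / real (s+3))
     = (\<Sum>s\<le>k. ?f (Suc (Suc (Suc s))))"
    unfolding sum_distrib_left
  proof (rule sum.cong[OF refl])
    fix s
    have h: "real ((Suc k) * (Suc (Suc k)) * ?K) * real (k choose s) = real (?K choose Suc (Suc (Suc s))) * real (Suc s) * real (Suc (Suc s)) * real (Suc (Suc (Suc s)))"
      using choose3[of k s] by (metis of_nat_mult)
    have "real ((Suc k) * (Suc (Suc k)) * ?K) * (real (k choose s) * x^(s+3) / real (s+3))
       = (real ((Suc k) * (Suc (Suc k)) * ?K) * real (k choose s)) * x^(s+3) / real (s+3)" by simp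
    also have "\<dots> = real (?K choose Suc (Suc (Suc s))) * real (Suc s) * real (Suc (Suc s)) * x^(s+3)"
      by (simp only: h) (simp add: field_simps del: binomial_Suc_Suc)
    also have "\<dots> = ?f (Suc (Suc (Suc s)))" by (simp add: algebra_simps eval_nat_numeral del: binomial_Suc_Suc)
    finally show "real ((Suc k) * (Suc (Suc k)) * ?K) * (real (k choose s) * x^(s+3) / real (s+3)) = ?f (Suc (Suc (Suc s)))" .
  qed
  also have "\<dots> = (\<Sum>t\<le>?K. ?f t) - 2"
    by (simp only: sum.atMost_Suc_shift) (simp del: binomial_Suc_Suc)
  also have "(\<Sum>t\<le>?K. ?f t) = (\<Sum>t\<le>?K. real t * (real t - 1) * real (?K choose t) * x^t)
       - 2 * (\<Sum>t\<le>?K. real t * real (?K choose t) * x^t) + 2 * (\<Sum>t\<le>?K. real (?K choose t) * x^t)"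
    by (simp add: sum_distrib_left sum_subtractf[symmetric] sum.distrib[symmetric] algebra_simps del: binomial_Suc_Suc of_nat_Suc sum.atMost_Suc)
  also have "\<dots> = real ?K * real (Suc (Suc k)) * x^2 * (1+x)^(Suc k)
    - 2 * (real ?K * x * (1+x)^(Suc (Suc k))) + 2 * (1+x)^?K"
    by (simp only: M2 M1 binom_sum)
  finally show ?thesis by simp
qed

lemma frac_combine: "(m::real) \<noteq> 0 \<Longrightarrow> a \<noteq> 0 \<Longrightarrow> b \<noteq> 0 \<Longrightarrow>
   (v)/m - X/(m*a*b) = (v*a*b - X)/(m*a*b)"
  by (simp add: field_simps)

lemma final_ineq:
  fixes p m d u yd :: real
  assumes m3: "m \<ge> 3" and d1: "d \<ge> 1" and u0: "u > 0" and yd1: "yd > 1"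
    and g: "2 + m*(m-1)*p^2 - 2*m*p - d*(m-1)*(1-p^2) + 2*d*(1-p) > 0"
    and c: "yd \<ge> 2 \<or> m \<ge> 5"
  shows "1 + (m+d)*((u-1)/m - (m*(m-1)*p^2*u - 2*m*p*u + 2*u - 2)/(m*(m-1)*(m-2))) < u + yd - 1"
proof -
  define G where "G = 2 + m*(m-1)*p^2 - 2*m*p - d*(m-1)*(1-p^2) + 2*d*(1-p)"
  define D0 where "D0 = m*(m-1)*(m-2)"
  have D0p: "D0 > 0" unfolding D0_def using m3 by simp
  have key: "D0 * (1 + (m+d)*((u-1)/m - (m*(m-1)*p^2*u - 2*m*p*u + 2*u - 2)/(m*(m-1)*(m-2))))
      = D0 + u*(D0 - m*G) - (m+d)*(m*(m-3))"
  proof -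
    let ?X = "m*(m-1)*p^2*u - 2*m*p*u + 2*u - 2"
    have nz: "m \<noteq> 0" "m - 1 \<noteq> 0" "m - 2 \<noteq> 0" using m3 by auto
    have "(u-1)/m - ?X/(m*(m-1)*(m-2)) = ((u-1)*(m-1)*(m-2) - ?X)/D0"
      unfolding D0_def using frac_combine[OF nz] by simp
    then have "D0 * (1 + (m+d)*((u-1)/m - ?X/(m*(m-1)*(m-2)))) = D0 + (m+d)*((u-1)*(m-1)*(m-2) - ?X)"
      using D0p by (simp add: distrib_left)
    also have "\<dots> = D0 + u*(D0 - m*G) - (m+d)*(m*(m-3))"
      unfolding D0_def G_def by (simp add: algebra_simps power2_eq_square)
    finally show ?thesis .
  qed
  have umG: "u*(m*G) > 0" using u0 m3 g G_def by simp
  have rest: "D0*(2-yd) \<le> (m+d)*(m*(m-3))"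
    using c
  proof
    assume "yd \<ge> 2"
    then have "D0*(2-yd) \<le> 0" using D0p by (simp add: mult_nonneg_nonpos)
    moreover have "(m+d)*(m*(m-3)) \<ge> 0" using m3 d1 by simp
    ultimately show ?thesis by linarith
  next
    assume m5: "m \<ge> 5"
    have "D0*(2-yd) \<le> D0*1" using D0p yd1 by (intro mult_left_mono) auto
    moreover have "(m+d)*(m*(m-3)) - D0 = m*(d*(m-3) - 2)"
      unfolding D0_def by (simp add: algebra_simps)
    moreover have "d*(m-3) \<ge> 1*2" using d1 m5 by (intro mult_mono) auto
    moreover have "m*(d*(m-3) - 2) \<ge> 0" using m5 calculation(3) by simp
    ultimately show ?thesis by linarith
  qed
  have "D0 * (1 + (m+d)*((u-1)/m - (m*(m-1)*p^2*u - 2*m*p*u + 2*u - 2)/(m*(m-1)*(m-2))))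
      < D0 * (u + yd - 1)"
    using key umG rest by (simp add: algebra_simps)
  then show ?thesis using D0p by simp
qed

lemma IS_finite:
  assumes "finite V" shows "finite {S. independent_set V E S}"
proof -
  have "{S. independent_set V E S} \<subseteq> Pow V" unfolding independent_set_def by auto
  moreover have "finite (Pow V)" using assms by simp
  ultimately show ?thesis by (rule finite_subset)
qed

lemma indep_poly_sum:
  assumes fV: "finite V"
  shows "indep_poly V E x = (\<Sum>S\<in>{S. independent_set V E S}. x ^ card S)"
proof -
  let ?I = "{S. independent_set V E S}"
  have fI: "finite ?I" using IS_finite[OF fV] .
  have img: "card ` ?I \<subseteq> {..card V}"
    using fV by (auto simp: independent_set_def intro: card_mono)
  have "(\<Sum>S\<in>?I. x ^ card S) = (\<Sum>t\<le>card V. \<Sum>S\<in>{S. S \<in> ?I \<and> card S = t}. x ^ card S)"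
    using sum.group[OF fI finite_atMost img, of "\<lambda>S. x ^ card S"] by simp
  also have "\<dots> = (\<Sum>t\<le>card V. real (num_indep V E t) * x ^ t)"
  proof (rule sum.cong[OF refl])
    fix t
    have "(\<Sum>S\<in>{S. S \<in> ?I \<and> card S = t}. x ^ card S) = (\<Sum>S\<in>{S. S \<in> ?I \<and> card S = t}. x ^ t)"
      by (rule sum.cong) auto
    also have "\<dots> = real (card {S. S \<in> ?I \<and> card S = t}) * x ^ t" by simp
    finally show "(\<Sum>S\<in>{S. S \<in> ?I \<and> card S = t}. x ^ card S) = real (num_indep V E t) * x ^ t"
      unfolding num_indep_def by simp
  qed
  finally show ?thesis unfolding indep_poly_def by simp
qed

lemma weight_Pow:
  assumes "finite A" shows "(\<Sum>S\<in>Pow A. (x::real) ^ card S) = (1+x) ^ card A"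
  using assms
proof (induction A rule: finite_induct)
  case empty then show ?case by simp
next
  case (insert a A)
  have fP: "finite (Pow A)" using insert.hyps by simp
  have disj: "Pow A \<inter> insert a ` Pow A = {}" using insert.hyps by auto
  have inj: "inj_on (insert a) (Pow A)" using insert.hyps unfolding inj_on_def by (metis PowD insert_ident subsetD)
  have "(\<Sum>S\<in>Pow (insert a A). x ^ card S) = (\<Sum>S\<in>Pow A. x ^ card S) + (\<Sum>S\<in>insert a ` Pow A. x ^ card S)"
    unfolding Pow_insert using fP disj by (simp add: sum.union_disjoint)
  also have "(\<Sum>S\<in>insert a ` Pow A. x ^ card S) = (\<Sum>S\<in>Pow A. x ^ card (insert a S))"
    using sum.reindex[OF inj] by simp
  also have "\<dots> = (\<Sum>S\<in>Pow A. x * x ^ card S)"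
  proof (rule sum.cong[OF refl])
    fix S assume "S \<in> Pow A"
    then have "finite S" "a \<notin> S" using insert.hyps finite_subset by auto
    then show "x ^ card (insert a S) = x * x ^ card S" by simp
  qed
  finally show ?case using insert by (simp add: sum_distrib_left[symmetric] algebra_simps)
qed

lemma K_lower:
  assumes "x \<ge> 0"
  shows "indep_poly (Kab_verts d m) (Kab_edge d m) x \<ge> (1+x)^m + (1+x)^d - 1"
proof -
  let ?V = "Kab_verts d m" and ?E = "Kab_edge d m"
  let ?A = "{0..<d}" and ?B = "{d..<d+m}"
  have fV: "finite ?V" unfolding Kab_verts_def by simp
  have sub: "Pow ?A \<union> Pow ?B \<subseteq> {S. independent_set ?V ?E S}"
    unfolding independent_set_def Kab_verts_def Kab_edge_def by auto
  have "(1+x)^m + (1+x)^d - 1 = (\<Sum>S\<in>Pow ?A \<union> Pow ?B. x ^ card S)"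
  proof -
    have i: "Pow ?A \<inter> Pow ?B = {{}}"
    proof -
      have "?A \<inter> ?B = {}" by auto
      then show ?thesis by blast
    qed
    show ?thesis using weight_Pow[of ?A x] weight_Pow[of ?B x] by (simp add: sum_Un i)
  qed
  also have "\<dots> \<le> (\<Sum>S\<in>{S. independent_set ?V ?E S}. x ^ card S)"
    using sub assms IS_finite[OF fV] by (intro sum_mono2) auto
  finally show ?thesis using indep_poly_sum[OF fV] by simp
qed
definition beta :: "nat \<Rightarrow> nat \<Rightarrow> real" where
  "beta k s = real (Suc (Suc k) choose s) - (if 2 \<le> s then real (k choose (s-2)) else 0)"

lemma beta_ge: "real (Suc k choose s) \<le> beta k s"
proof (cases "2 \<le> s")
  case True
  then obtain j where j: "s = Suc (Suc j)" by (metis add_2_eq_Suc le_Suc_ex)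
  have "Suc (Suc k) choose s = (Suc k choose Suc j) + (Suc k choose s)" using j by simp
  moreover have "Suc k choose Suc j \<ge> k choose j" by simp
  ultimately show ?thesis unfolding beta_def using True j by simp
next
  case False
  then show ?thesis unfolding beta_def using binomial_right_mono[of "Suc k" "Suc (Suc k)" s] by simp
qed

lemma count_bound:
  fixes W :: "'a set" and G :: "'a set set" and k s :: nat
  assumes fW: "finite W" and cW: "card W \<le> k+2" and GW: "G \<subseteq> {T. T \<subseteq> W \<and> card T = s}"
   and pair: "card W = k+2 \<Longrightarrow> \<exists>u w. u\<in>W \<and> w\<in>W \<and> u\<noteq>w \<and> (\<forall>T\<in>G. \<not>(u\<in>T \<and> w\<in>T))"
  shows "real (card G) \<le> beta k s"
proof -
  let ?A = "{T. T \<subseteq> W \<and> card T = s}"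
  have fA: "finite ?A" using fW by simp
  have cA: "card ?A = card W choose s" using n_subsets[OF fW] .
  show ?thesis
  proof (cases "card W = k+2")
    case False
    then have "card W \<le> Suc k" using cW by simp
    then have "card G \<le> Suc k choose s"
      using card_mono[OF fA GW] cA binomial_right_mono[of "card W" "Suc k" s] by simp
    then show ?thesis using beta_ge[of k s] by linarith
  next
    case True
    obtain u w where uw: "u\<in>W" "w\<in>W" "u\<noteq>w" and nG: "\<forall>T\<in>G. \<not>(u\<in>T \<and> w\<in>T)"
      using pair[OF True] by blast
    let ?B = "{T. T \<subseteq> W \<and> card T = s \<and> u \<in> T \<and> w \<in> T}"
    have BA: "?B \<subseteq> ?A" by auto
    have fB: "finite ?B" using fA BA finite_subset by blast
    have GAB: "G \<subseteq> ?A - ?B" using GW nG by auto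
    have cAB: "card (?A - ?B) = card ?A - card ?B" using card_Diff_subset[OF fB BA] .
    have cBA: "card ?B \<le> card ?A" using card_mono[OF fA BA] .
    have cB: "real (card ?B) = (if 2 \<le> s then real (k choose (s-2)) else 0)"
    proof (cases "2 \<le> s")
      case False
      have "?B = {}"
      proof (rule ccontr)
        assume "?B \<noteq> {}"
        then obtain T where T: "T \<subseteq> W" "card T = s" "u \<in> T" "w \<in> T" by blast
        have "{u,w} \<subseteq> T" using T by auto
        then have "card {u,w} \<le> card T" using T fW finite_subset card_mono by metis
        then show False using uw T False by simp
      qed
      then have "card ?B = 0" by (metis card.empty)
      then show ?thesis using False by simp
    next
      case True
      let ?D = "{U. U \<subseteq> W - {u,w} \<and> card U = s - 2}"
      have fWD: "finite (W - {u,w})" using fW by simp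
      have cWD: "card (W - {u,w}) = k" using True uw \<open>card W = k+2\<close> fW by (simp add: card_Diff_subset)
      have img: "?B = (\<lambda>U. U \<union> {u,w}) ` ?D"
      proof (rule set_eqI, rule iffI)
        fix T assume T: "T \<in> ?B"
        then have fT: "finite T" using fW finite_subset by auto
        have "card (T - {u,w}) = s - 2" using T fT uw by (simp add: card_Diff_subset)
        moreover have "T = (T - {u,w}) \<union> {u,w}" using T by auto
        ultimately show "T \<in> (\<lambda>U. U \<union> {u,w}) ` ?D" using T by blast
      next
        fix T assume "T \<in> (\<lambda>U. U \<union> {u,w}) ` ?D"
        then obtain U where U: "U \<subseteq> W - {u,w}" "card U = s - 2" "T = U \<union> {u,w}" by blast
        have fU: "finite U" using U fWD finite_subset by auto
        have "u \<notin> U" "w \<notin> U" using U by auto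
        then have "card T = s" using U fU uw True by simp
        then show "T \<in> ?B" using U uw by auto
      qed
      have inj: "inj_on (\<lambda>U. U \<union> {u,w}) ?D"
        unfolding inj_on_def by blast
      have "card ?B = card ?D" unfolding img using card_image[OF inj] .
      also have "\<dots> = k choose (s-2)" using n_subsets[OF fWD] cWD by simp
      finally show ?thesis using True by simp
    qed
    have fAB: "finite (?A - ?B)" using fA by simp
    have "card G \<le> card (?A - ?B)" using card_mono[OF fAB GAB] .
    then have "card G \<le> card ?A - card ?B" using cAB by simp
    then have "real (card G) \<le> real (card ?A - card ?B)" by simp
    also have "\<dots> = real (card ?A) - real (card ?B)" using cBA by (simp add: of_nat_diff)
    finally have "real (card G) \<le> real (card ?A) - real (card ?B)" .
    then show ?thesis unfolding beta_def using cB cA True by simp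
  qed
qed
lemma double_count:
  assumes fV: "finite V" and fF: "finite F" and sub: "\<forall>S\<in>F. S \<subseteq> V"
  shows "(\<Sum>S\<in>F. card S) = (\<Sum>v\<in>V. card {S\<in>F. v \<in> S})"
proof -
  have "(\<Sum>S\<in>F. card S) = (\<Sum>S\<in>F. \<Sum>v\<in>V. if v \<in> S then 1 else 0)"
  proof (rule sum.cong[OF refl])
    fix S assume "S \<in> F"
    then have "S \<subseteq> V" using sub by auto
    then show "card S = (\<Sum>v\<in>V. if v \<in> S then 1 else 0)"
      using fV by (simp add: sum.If_cases Int_absorb1 Int_def[symmetric])
  qed
  also have "\<dots> = (\<Sum>v\<in>V. \<Sum>S\<in>F. if v \<in> S then 1 else 0)" by (rule sum.swap)
  also have "\<dots> = (\<Sum>v\<in>V. card {S\<in>F. v \<in> S})"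
  proof (rule sum.cong[OF refl])
    fix v
    show "(\<Sum>S\<in>F. if v \<in> S then 1 else 0) = card {S\<in>F. v \<in> S}"
      using fF by (simp add: sum.If_cases Int_def)
  qed
  finally show ?thesis .
qed

lemma vertex_bound:
  assumes sg: "simple_graph V E" and cV: "card V = k + 3 + d" and md: "min_degree_ge V E d"
    and small: "\<forall>S. independent_set V E S \<longrightarrow> card S < k+3"
    and v: "v \<in> V" and t1: "t \<ge> 1"
  shows "real (card {S\<in>{S. independent_set V E S \<and> card S = t}. v \<in> S}) \<le> beta k (t-1)"
proof -
  have fV: "finite V" using sg unfolding simple_graph_def by simp
  have sym: "\<And>a b. E a b \<Longrightarrow> E b a" and irr: "\<And>a. \<not> E a a" and inV: "\<And>a b. E a b \<Longrightarrow> a \<in> V \<and> b \<in> V"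
    using sg unfolding simple_graph_def by auto
  let ?F = "{S\<in>{S. independent_set V E S \<and> card S = t}. v \<in> S}"
  let ?W = "{w\<in>V. w \<noteq> v \<and> \<not> E v w}"
  let ?N = "{u\<in>V. E v u}"
  have fW: "finite ?W" using fV by simp
  have decomp: "?W \<union> insert v ?N = V" using v by auto
  have vN: "v \<notin> ?N" using irr by auto
  have disj: "?W \<inter> insert v ?N = {}" by auto
  have fI: "finite (insert v ?N)" using fV by simp
  have "card (?W \<union> insert v ?N) = card ?W + card (insert v ?N)"
    using card_Un_disjoint[OF fW fI disj] .
  then have "card V = card ?W + card (insert v ?N)" by (simp only: decomp)
  moreover have "card (insert v ?N) = Suc (card ?N)" using vN fV by simp
  moreover have "card ?N \<ge> d" using md v unfolding min_degree_ge_def degree_def by auto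
  ultimately have cW: "card ?W \<le> k+2" using cV by simp
  let ?G = "(\<lambda>S. S - {v}) ` ?F"
  have inj: "inj_on (\<lambda>S. S - {v}) ?F"
  proof (rule inj_onI)
    fix S S' assume "S \<in> ?F" "S' \<in> ?F" "S - {v} = S' - {v}"
    then have "v \<in> S" "v \<in> S'" by auto
    then have "S = insert v (S - {v})" "S' = insert v (S' - {v})" by auto
    then show "S = S'" using \<open>S - {v} = S' - {v}\<close> by simp
  qed
  have cG: "card ?G = card ?F" using card_image[OF inj] .
  have GW: "?G \<subseteq> {T. T \<subseteq> ?W \<and> card T = t - 1}"
  proof
    fix T assume "T \<in> ?G"
    then obtain S where S: "independent_set V E S" "card S = t" "v \<in> S" "T = S - {v}" by auto
    have fS: "finite S" using S(1) fV finite_subset unfolding independent_set_def by blast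
    have "T \<subseteq> ?W" using S unfolding independent_set_def by auto
    moreover have "card T = t - 1" using S fS by simp
    ultimately show "T \<in> {T. T \<subseteq> ?W \<and> card T = t - 1}" by simp
  qed
  have pair: "\<exists>a b. a\<in>?W \<and> b\<in>?W \<and> a\<noteq>b \<and> (\<forall>T\<in>?G. \<not>(a\<in>T \<and> b\<in>T))" if c: "card ?W = k+2"
  proof -
    have "card (insert v ?W) = k+3" using c fW by simp
    then have "\<not> independent_set V E (insert v ?W)" using small by auto
    moreover have "insert v ?W \<subseteq> V" using v by auto
    ultimately obtain a b where ab: "a \<in> insert v ?W" "b \<in> insert v ?W" "E a b"
      unfolding independent_set_def by blast
    have "a \<noteq> v" using ab sym irr by auto
    moreover have "b \<noteq> v" using ab irr sym by auto
    moreover have "a \<noteq> b" using ab irr by auto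
    moreover have "\<forall>T\<in>?G. \<not>(a\<in>T \<and> b\<in>T)"
    proof
      fix T assume "T \<in> ?G"
      then obtain S where S: "independent_set V E S" "T = S - {v}" by auto
      then show "\<not>(a\<in>T \<and> b\<in>T)" using ab unfolding independent_set_def by auto
    qed
    ultimately show ?thesis using ab by blast
  qed
  have "real (card ?G) \<le> beta k (t-1)" using count_bound[OF fW cW GW pair] by blast
  then show ?thesis using cG by simp
qed

lemma coeff_bound:
  assumes sg: "simple_graph V E" and cV: "card V = k + 3 + d" and md: "min_degree_ge V E d"
    and small: "\<forall>S. independent_set V E S \<longrightarrow> card S < k+3" and t1: "t \<ge> 1"
  shows "real t * real (num_indep V E t) \<le> real (card V) * beta k (t-1)"
proof -
  have fV: "finite V" using sg unfolding simple_graph_def by simp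
  let ?F = "{S. independent_set V E S \<and> card S = t}"
  have "?F \<subseteq> {S. independent_set V E S}" by auto
  then have fF: "finite ?F" using IS_finite[OF fV, of E] by (rule finite_subset)
  have sub: "\<forall>S\<in>?F. S \<subseteq> V" unfolding independent_set_def by auto
  have e1: "(\<Sum>S\<in>?F. card S) = t * card ?F" by simp
  have natEq: "t * card ?F = (\<Sum>v\<in>V. card {S\<in>?F. v \<in> S})"
    using double_count[OF fV fF sub] e1 by simp
  have "real t * real (card ?F) = real (t * card ?F)" by simp
  also have "\<dots> = real (\<Sum>v\<in>V. card {S\<in>?F. v \<in> S})" using natEq by (simp only:)
  also have "\<dots> = (\<Sum>v\<in>V. real (card {S\<in>?F. v \<in> S}))" by (rule of_nat_sum)
  also have "\<dots> \<le> (\<Sum>v\<in>V. beta k (t-1))"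
    by (rule sum_mono) (rule vertex_bound[OF sg cV md small _ t1])
  also have "\<dots> = real (card V) * beta k (t-1)" by simp
  finally show ?thesis unfolding num_indep_def .
qed

lemma case1:
  assumes sg: "simple_graph V E" and cV: "card V = n" and md: "min_degree_ge V E d"
    and x0: "x > 0" and indA: "independent_set V E A" and cA: "card A \<ge> n - d" and m1: "n - d \<ge> 1"
  shows "graph_iso V E (Kab_verts d (n-d)) (Kab_edge d (n-d))
         \<or> indep_poly V E x < (1+x)^(n-d) + (1+x)^d - 1"
proof -
  have fV: "finite V" using sg unfolding simple_graph_def by simp
  have sym: "\<And>a b. E a b \<Longrightarrow> E b a" and irr: "\<And>a. \<not> E a a" and inV: "\<And>a b. E a b \<Longrightarrow> a \<in> V \<and> b \<in> V"
    using sg unfolding simple_graph_def by auto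
  have AV: "A \<subseteq> V" and Aind: "\<And>a b. a \<in> A \<Longrightarrow> b \<in> A \<Longrightarrow> \<not> E a b"
    using indA unfolding independent_set_def by auto
  define B where "B = V - A"
  have fA: "finite A" using AV fV finite_subset by blast
  have fB: "finite B" using fV B_def by simp
  have cB: "card B = n - card A" unfolding B_def using card_Diff_subset[OF fA AV] cV by simp
  have Ane: "A \<noteq> {}" using cA m1 by auto
  have NB: "{u\<in>V. E a u} \<subseteq> B" if "a \<in> A" for a
    using that Aind unfolding B_def by auto
  have degA: "card {u\<in>V. E a u} \<ge> d" if "a \<in> A" for a
    using md that AV unfolding min_degree_ge_def degree_def by auto
  obtain a0 where a0: "a0 \<in> A" using Ane by blast
  have "d \<le> card B" using degA[OF a0] card_mono[OF fB NB[OF a0]] by simp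
  then have cBd: "card B = d" and cAm: "card A = n - d" using cB cA cV card_mono[OF fV AV] by auto
  have NBeq: "{u\<in>V. E a u} = B" if "a \<in> A" for a
    using card_subset_eq[OF fB NB[OF that]] degA[OF that] cBd card_mono[OF fB NB[OF that]] by simp
  have cross: "E a b" if "a \<in> A" "b \<in> B" for a b
    using NBeq[OF that(1)] that(2) by blast
  have AB: "A \<inter> B = {}" "A \<union> B = V" using AV unfolding B_def by auto
  let ?IB = "{S. S \<subseteq> B \<and> independent_set V E S}"
  have ISeq: "{S. independent_set V E S} = Pow A \<union> ?IB"
  proof (rule set_eqI, rule iffI)
    fix S assume S: "S \<in> {S. independent_set V E S}"
    then have SV: "S \<subseteq> V" and Si: "\<And>a b. a \<in> S \<Longrightarrow> b \<in> S \<Longrightarrow> \<not> E a b"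
      unfolding independent_set_def by auto
    show "S \<in> Pow A \<union> ?IB"
    proof (cases "S \<subseteq> A")
      case True then show ?thesis by simp
    next
      case False
      then obtain b where b: "b \<in> S" "b \<notin> A" by blast
      then have bB: "b \<in> B" using SV unfolding B_def by auto
      have "S \<subseteq> B"
      proof
        fix s assume s: "s \<in> S"
        show "s \<in> B"
        proof (rule ccontr)
          assume "s \<notin> B"
          then have "s \<in> A" using s SV unfolding B_def by auto
          then have "E s b" using cross bB by blast
          then show False using Si s b(1) by blast
        qed
      qed
      then show ?thesis using S by simp
    qed
  next
    fix S assume "S \<in> Pow A \<union> ?IB"
    then show "S \<in> {S. independent_set V E S}"
      using AV Aind unfolding independent_set_def by auto
  qed
  have "?IB \<subseteq> Pow B" by auto
  moreover have "finite (Pow B)" using fB by simp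
  ultimately have fIB: "finite ?IB" using finite_subset by blast
  have inter: "Pow A \<inter> ?IB = {{}}"
    using AB(1) by (auto simp: independent_set_def)
  have fPA: "finite (Pow A)" using fA by simp
  have "(\<Sum>S\<in>Pow A \<union> ?IB. x ^ card S) = (\<Sum>S\<in>Pow A. x ^ card S) + (\<Sum>S\<in>?IB. x ^ card S) - (\<Sum>S\<in>Pow A \<inter> ?IB. x ^ card S)"
    by (rule sum_Un[OF fPA fIB])
  then have Peq: "indep_poly V E x = (1+x)^(n-d) + (\<Sum>S\<in>?IB. x ^ card S) - 1"
    using indep_poly_sum[OF fV, of E x] ISeq weight_Pow[OF fA, of x] cAm inter
    by simp
  show ?thesis
  proof (cases "\<exists>u w. u \<in> B \<and> w \<in> B \<and> E u w")
    case True
    then obtain u w where uw: "u \<in> B" "w \<in> B" "E u w" by blast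
    have uneq: "u \<noteq> w" using uw irr by auto
    have sub: "?IB \<subseteq> Pow B" by auto
    have nin: "{u,w} \<in> Pow B - ?IB" using uw unfolding independent_set_def by auto
    have fPB: "finite (Pow B)" using fB by simp
    have "(\<Sum>S\<in>Pow B. x ^ card S) = (\<Sum>S\<in>?IB. x ^ card S) + (\<Sum>S\<in>Pow B - ?IB. x ^ card S)"
      using sum.subset_diff[OF sub fPB, of "\<lambda>S. x ^ card S"] by (simp add: add.commute)
    moreover have "(\<Sum>S\<in>Pow B - ?IB. x ^ card S) \<ge> x ^ card {u,w}"
      using nin x0 fPB by (intro member_le_sum) auto
    moreover have "x ^ card {u,w} > 0" using x0 by simp
    moreover have "(\<Sum>S\<in>Pow B. x ^ card S) = (1+x)^d" using weight_Pow[OF fB, of x] cBd by simp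
    ultimately have "(\<Sum>S\<in>?IB. x ^ card S) < (1+x)^d" by linarith
    then show ?thesis using Peq by simp
  next
    case False
    have noB: "\<And>u w. u \<in> B \<Longrightarrow> w \<in> B \<Longrightarrow> \<not> E u w" using False by blast
    obtain f1 where f1: "bij_betw f1 B {0..<d}"
      using finite_same_card_bij[OF fB, of "{0..<d}"] cBd by auto
    obtain f2 where f2: "bij_betw f2 A {d..<n}"
      using finite_same_card_bij[OF fA, of "{d..<n}"] cAm by auto
    define f where "f = (\<lambda>v. if v \<in> B then f1 v else f2 v)"
    have b1: "bij_betw f B {0..<d}"
    proof -
      have "bij_betw f B {0..<d} = bij_betw f1 B {0..<d}"
        by (rule bij_betw_cong) (simp add: f_def)
      then show ?thesis using f1 by simp
    qed
    have b2: "bij_betw f A {d..<n}"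
    proof -
      have "bij_betw f A {d..<n} = bij_betw f2 A {d..<n}"
        by (rule bij_betw_cong) (use AB(1) in \<open>auto simp: f_def\<close>)
      then show ?thesis using f2 by simp
    qed
    have "B \<subseteq> V" unfolding B_def by auto
    then have "card B \<le> card V" using card_mono[OF fV] by blast
    then have dn: "d \<le> n" using cBd cV by simp
    have bij: "bij_betw f V {0..<n}"
    proof -
      have "bij_betw f (B \<union> A) ({0..<d} \<union> {d..<n})" by (rule bij_betw_combine[OF b1 b2]) auto
      moreover have "B \<union> A = V" using AB by auto
      moreover have "{0..<d} \<union> {d..<n} = {0..<n}" using dn by auto
      ultimately show ?thesis by simp
    qed
    have fB1: "v \<in> B \<Longrightarrow> f v < d" for v using b1 unfolding bij_betw_def by auto
    have fA1: "v \<in> A \<Longrightarrow> d \<le> f v \<and> f v < n" for v using b2 unfolding bij_betw_def by auto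
    have "graph_iso V E (Kab_verts d (n-d)) (Kab_edge d (n-d))"
      unfolding graph_iso_def
    proof (intro exI conjI ballI)
      show "bij_betw f V (Kab_verts d (n-d))" using bij dn unfolding Kab_verts_def by simp
    next
      fix u v assume u: "u \<in> V" and v: "v \<in> V"
      have nd: "d + (n - d) = n" using dn by simp
      have uc: "u \<in> A \<or> u \<in> B" and vc: "v \<in> A \<or> v \<in> B" using u v AB by auto
      show "E u v \<longleftrightarrow> Kab_edge d (n-d) (f u) (f v)"
        unfolding Kab_edge_def nd
      proof (cases "u \<in> A")
        case uA: True
        show "E u v = (f u < n \<and> f v < n \<and> (f u < d) \<noteq> (f v < d))"
        proof (cases "v \<in> A")
          case True
          then show ?thesis using Aind uA fA1 by fastforce
        next
          case False
          then have vB: "v \<in> B" using vc by simp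
          then show ?thesis using cross[OF uA vB] fA1[OF uA] fB1[OF vB] dn by auto
        qed
      next
        case False
        then have uB: "u \<in> B" using uc by simp
        show "E u v = (f u < n \<and> f v < n \<and> (f u < d) \<noteq> (f v < d))"
        proof (cases "v \<in> A")
          case vA: True
          then show ?thesis using sym[OF cross[OF vA uB]] fA1[OF vA] fB1[OF uB] dn by auto
        next
          case False
          then have vB: "v \<in> B" using vc by simp
          then show ?thesis using noB[OF uB vB] fB1[OF uB] fB1[OF vB] by auto
        qed
      qed
    qed
    then show ?thesis by simp
  qed
qed

lemma num_indep_0:
  fixes V :: "'a set" and E :: "'a \<Rightarrow> 'a \<Rightarrow> bool"
  assumes "finite V" shows "num_indep V E 0 = 1"
proof -
  have "{S. independent_set V E S \<and> card S = 0} = {{}}"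
  proof (rule set_eqI, rule iffI)
    fix S :: "'a set" assume S: "S \<in> {S. independent_set V E S \<and> card S = 0}"
    then have "S \<subseteq> V" unfolding independent_set_def by auto
    then have "finite S" using assms by (rule finite_subset)
    then show "S \<in> {{}}" using S by simp
  next
    fix S :: "'a set" assume "S \<in> {{}}"
    then show "S \<in> {S. independent_set V E S \<and> card S = 0}" unfolding independent_set_def by simp
  qed
  then show ?thesis unfolding num_indep_def by simp
qed

lemma beta_zero: assumes "s > k + 2" shows "beta k s = 0"
proof -
  have a: "Suc (Suc k) choose s = 0" using assms by (simp add: binomial_eq_0)
  have b: "k choose (s-2) = 0" using assms by (simp add: binomial_eq_0)
  show ?thesis by (simp only: beta_def a b) simp
qed

lemma psi_shift: "(\<Sum>s\<le>Suc (Suc k). (if 2 \<le> s then real (k choose (s-2)) * x^(Suc s) / real (Suc s) else 0))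
   = (\<Sum>j\<le>k. real (k choose j) * x^(j+3) / real (j+3))"
  by (subst sum.atMost_Suc_shift, subst sum.atMost_Suc_shift) (simp add: eval_nat_numeral add.commute)

lemma case2b:
  fixes x :: real
  assumes sg: "simple_graph V E" and cV: "card V = k + 3 + d" and md: "min_degree_ge V E d"
    and small: "\<forall>S. independent_set V E S \<longrightarrow> card S < k+3" and x0: "x > 0" and d1: "d \<ge> 1"
    and g: "2 + real (k+3)*(real (k+3)-1)*(x/(1+x))^2 - 2*real (k+3)*(x/(1+x))
            - real d*(real (k+3)-1)*(1-(x/(1+x))^2) + 2*real d*(1-(x/(1+x))) > 0"
    and c: "(1+x)^d \<ge> 2 \<or> real (k+3) \<ge> 5"
  shows "indep_poly V E x < (1+x)^(k+3) + (1+x)^d - 1"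
proof -
  have fV: "finite V" using sg unfolding simple_graph_def by simp
  define N where "N = k + 2 + d"
  have cV': "card V = Suc N" using cV N_def by simp
  define h where "h = (\<lambda>s. real (card V) * beta k s * x^(Suc s) / real (Suc s))"
  have "indep_poly V E x = (\<Sum>t\<le>Suc N. real (num_indep V E t) * x ^ t)"
    unfolding indep_poly_def cV' ..
  also have "\<dots> = real (num_indep V E 0) + (\<Sum>s\<le>N. real (num_indep V E (Suc s)) * x ^ (Suc s))"
    by (simp only: sum.atMost_Suc_shift) simp
  also have "\<dots> \<le> 1 + (\<Sum>s\<le>N. h s)"
  proof -
    have "(\<Sum>s\<le>N. real (num_indep V E (Suc s)) * x ^ (Suc s)) \<le> (\<Sum>s\<le>N. h s)"
    proof (rule sum_mono)
      fix s
      have cb: "real (Suc s) * real (num_indep V E (Suc s)) \<le> real (card V) * beta k s"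
        using coeff_bound[OF sg cV md small, of "Suc s"] by simp
      have "real (num_indep V E (Suc s)) \<le> real (card V) * beta k s / real (Suc s)"
        using cb by (simp add: field_simps del: of_nat_Suc)
      then have "real (num_indep V E (Suc s)) * x ^ (Suc s) \<le> (real (card V) * beta k s / real (Suc s)) * x ^ (Suc s)"
        using x0 by (intro mult_right_mono) auto
      then show "real (num_indep V E (Suc s)) * x ^ (Suc s) \<le> h s" unfolding h_def by simp
    qed
    then show ?thesis using num_indep_0[OF fV] by simp
  qed
  also have "(\<Sum>s\<le>N. h s) = (\<Sum>s\<le>Suc (Suc k). h s)"
    by (rule sum.mono_neutral_right) (auto simp: N_def h_def beta_zero)
  also have "\<dots> = real (card V) * ((\<Sum>s\<le>Suc (Suc k). real (Suc (Suc k) choose s) * x^(Suc s) / real (Suc s))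
        - (\<Sum>s\<le>Suc (Suc k). (if 2 \<le> s then real (k choose (s-2)) * x^(Suc s) / real (Suc s) else 0)))"
  proof -
    have trm: "h s = real (card V) * (real (Suc (Suc k) choose s) * x ^ Suc s / real (Suc s)) -
         real (card V) * (if 2 \<le> s then real (k choose (s - 2)) * x ^ Suc s / real (Suc s) else 0)" for s
      unfolding h_def beta_def by (cases "2 \<le> s") (simp_all add: left_diff_distrib right_diff_distrib diff_divide_distrib)
    show ?thesis unfolding trm by (simp only: sum_subtractf sum_distrib_left right_diff_distrib)
  qed
  finally have P: "indep_poly V E x \<le> 1 + real (card V) * ((\<Sum>s\<le>Suc (Suc k). real (Suc (Suc k) choose s) * x^(Suc s) / real (Suc s))
        - (\<Sum>j\<le>k. real (k choose j) * x^(j+3) / real (j+3)))"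
    unfolding psi_shift .
  define y where "y = 1 + x"
  have y0: "y > 0" using x0 y_def by simp
  define m where "m = real (k+3)"
  have m3: "m \<ge> 3" using m_def by simp
  have Phi': "(\<Sum>s\<le>Suc (Suc k). real (Suc (Suc k) choose s) * x^(Suc s) / real (Suc s)) = (y^(k+3) - 1)/m"
  proof -
    have "m * (\<Sum>s\<le>Suc (Suc k). real (Suc (Suc k) choose s) * x^(Suc s) / real (Suc s)) = y^(k+3) - 1"
      using Phi[of "Suc (Suc k)" x] unfolding m_def y_def by (simp del: sum.atMost_Suc add: eval_nat_numeral)
    moreover have "m \<noteq> 0" using m3 by simp
    ultimately show ?thesis by (metis nonzero_eq_divide_eq mult.commute)
  qed
  have Psi': "(\<Sum>j\<le>k. real (k choose j) * x^(j+3) / real (j+3))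
      = (m*(m-1)*(x/y)^2*y^(k+3) - 2*m*(x/y)*y^(k+3) + 2*y^(k+3) - 2)/(m*(m-1)*(m-2))"
  proof -
    let ?S = "(\<Sum>j\<le>k. real (k choose j) * x^(j+3) / real (j+3))"
    have p3: "y^(k+3) = y^(Suc k) * y^2" by (simp add: eval_nat_numeral)
    have p2: "y^(Suc (Suc k)) * y = y^(k+3)" by (simp add: eval_nat_numeral)
    have e1: "m*(m-1)*(x/y)^2*y^(k+3) = m*(m-1)*x^2*y^(Suc k)"
      unfolding p3 using y0 by (simp add: power_divide)
    have e2: "2*m*(x/y)*y^(k+3) = 2*m*x*y^(Suc (Suc k))"
      unfolding p2[symmetric] using y0 by simp
    have den: "real (Suc k * Suc (Suc k) * Suc (Suc (Suc k))) = m*(m-1)*(m-2)" unfolding m_def by (simp add: algebra_simps)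
    have nz: "m*(m-1)*(m-2) \<noteq> 0" using m3 by simp
    have r1: "real (Suc (Suc (Suc k))) = m" unfolding m_def by simp
    have r2: "real (Suc (Suc k)) = m - 1" unfolding m_def by simp
    have r4: "y^(Suc (Suc (Suc k))) = y^(k+3)" by (simp add: eval_nat_numeral)
    have y1: "1 + x = y" using y_def by simp
    have "real (Suc k * Suc (Suc k) * Suc (Suc (Suc k))) * ?S
      = m*(m-1)*x^2*y^(Suc k) - 2*m*x*y^(Suc (Suc k)) + 2*y^(k+3) - 2"
      using Psi[of k x] by (simp only: r1 r2 y1 r4)
    then have "?S * (m*(m-1)*(m-2)) = m*(m-1)*x^2*y^(Suc k) - 2*m*x*y^(Suc (Suc k)) + 2*y^(k+3) - 2"
      unfolding den by (simp only: mult.commute)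
    then have "?S = (m*(m-1)*x^2*y^(Suc k) - 2*m*x*y^(Suc (Suc k)) + 2*y^(k+3) - 2)/(m*(m-1)*(m-2))"
      by (simp only: nonzero_eq_divide_eq[OF nz])
    then show ?thesis by (simp only: e1 e2)
  qed
  have cVr: "real (card V) = m + real d" unfolding m_def using cV by simp
  have u0: "y^(k+3) > 0" using y0 by simp
  have yd1: "y^d > 1" using y0 x0 d1 y_def by (simp add: one_less_power)
  have gg: "2 + m*(m-1)*(x/y)^2 - 2*m*(x/y) - real d*(m-1)*(1-(x/y)^2) + 2*real d*(1-(x/y)) > 0"
    using g unfolding m_def y_def by simp
  have cc: "y^d \<ge> 2 \<or> m \<ge> 5" using c unfolding m_def y_def by simp
  have fin: "1 + (m+real d)*((y^(k+3)-1)/m - (m*(m-1)*(x/y)^2*y^(k+3) - 2*m*(x/y)*y^(k+3) + 2*y^(k+3) - 2)/(m*(m-1)*(m-2))) < y^(k+3) + y^d - 1"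
    using final_ineq[OF m3 _ u0 yd1 gg cc] d1 by simp
  show ?thesis using P fin unfolding Phi' Psi' cVr y_def by simp
qed

lemma pow_lower2:
  fixes x :: real assumes x0: "x > 0" and m2: "m \<ge> 2"
  shows "(1+x)^m \<ge> 1 + real m * x + x^2"
proof -
  obtain j where j: "m = j + 2" using m2 by (metis add.commute le_Suc_ex)
  have b: "1 + real j * x \<le> (1+x)^j" using Bernoulli_inequality[of x j] x0 by simp
  have "(1+x)^m = (1+x)^j * (1+x)^2" unfolding j by (rule power_add)
  then have "(1+x)^m = (1+x)^2 * (1+x)^j" by (simp only: mult.commute)
  also have "\<dots> \<ge> (1+x)^2 * (1 + real j * x)" using b by (intro mult_left_mono) auto
  finally have "(1+x)^m \<ge> (1+x)^2 * (1 + real j * x)" .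
  moreover have "(1+x)^2 * (1 + real j * x) = 1 + real m * x + x^2 + real j * x^2 * (2 + x)"
    unfolding j by (simp add: algebra_simps power2_eq_square)
  moreover have "real j * x^2 * (2 + x) \<ge> 0" using x0 by simp
  ultimately show ?thesis by linarith
qed

lemma case2a:
  fixes x :: real and V :: "'a set"
  assumes sg: "simple_graph V E" and cV: "card V = m + d" and le1: "\<forall>S. independent_set V E S \<longrightarrow> card S \<le> 1"
    and x0: "x > 0" and m2: "m \<ge> 2" and d1: "d \<ge> 1"
  shows "indep_poly V E x < (1+x)^m + (1+x)^d - 1"
proof -
  have fV: "finite V" using sg unfolding simple_graph_def by simp
  let ?I = "{S. independent_set V E S}"
  let ?T = "insert {} ((\<lambda>v. {v}) ` V)"
  have sub: "?I \<subseteq> ?T"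
  proof
    fix S assume S: "S \<in> ?I"
    then have SV: "S \<subseteq> V" unfolding independent_set_def by auto
    then have fS: "finite S" using fV by (rule finite_subset)
    have "card S \<le> Suc 0" using le1 S by simp
    then have all: "\<forall>a\<in>S. \<forall>b\<in>S. a = b" using card_le_Suc0_iff_eq[OF fS] by simp
    show "S \<in> ?T"
    proof (cases "S = {}")
      case True then show ?thesis by simp
    next
      case False
      then obtain v where v: "v \<in> S" by blast
      then have "S = {v}" using all by blast
      then show ?thesis using v SV by auto
    qed
  qed
  have fT: "finite ?T" using fV by simp
  have inj: "inj_on (\<lambda>v. {v}) V" by (simp add: inj_on_def)
  have "indep_poly V E x = (\<Sum>S\<in>?I. x ^ card S)" using indep_poly_sum[OF fV] .
  also have "\<dots> \<le> (\<Sum>S\<in>?T. x ^ card S)"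
    using sub fT x0 by (intro sum_mono2) auto
  also have "\<dots> = 1 + (\<Sum>S\<in>(\<lambda>v. {v}) ` V. x ^ card S)"
    using fV by (subst sum.insert) auto
  also have "(\<Sum>S\<in>(\<lambda>v. {v}) ` V. x ^ card S) = (\<Sum>v\<in>V. x ^ card {v})"
    using sum.reindex[OF inj, of "\<lambda>S. x ^ card S"] by simp
  also have "\<dots> = real (card V) * x" by simp
  finally have P: "indep_poly V E x \<le> 1 + real (card V) * x" .
  have "(1+x)^m \<ge> 1 + real m * x + x^2" using pow_lower2[OF x0 m2] .
  moreover have "(1+x)^d \<ge> 1 + real d * x" using Bernoulli_inequality[of x d] x0 by simp
  moreover have "x^2 > 0" using x0 by simp
  moreover have "real (card V) * x = real m * x + real d * x" using cV by (simp add: algebra_simps)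
  ultimately show ?thesis using P by linarith
qed

lemma pT_ident:
  fixes x y d :: real assumes x0: "x > 0" and y: "y = 1 + x"
  shows "(x/y)^2 * ((2/x)*d^2 + (2/x+1)*d + (2/(x*y))*(2/x)*d + 2/(x*y))
    = 2*(1-x/y)*(x/y)*d^2 + (2*(1-x/y)+x/y)*(x/y)*d + 4*(1-x/y)^3*d + 2*(1-x/y)^2*(x/y)"
proof -
  have yn: "y \<noteq> 0" and xn: "x \<noteq> 0" using x0 y by auto
  have q: "1 - x/y = 1/y" using yn y by (simp add: field_simps)
  show ?thesis unfolding q using xn yn
    by (simp add: field_simps power2_eq_square power3_eq_cube)
qed

theorem mainTheorem5:
  fixes V :: "'a set" and E :: "'a \<Rightarrow> 'a \<Rightarrow> bool" and \<delta> n :: nat and x :: real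
  assumes "simple_graph V E"
    and "card V = n"
    and "\<delta> \<ge> 1"
    and "min_degree_ge V E \<delta>"
    and "x > 0"
    and "real n \<ge> (C_const x - 1) * (real \<delta>)^2
                 + ((1 - D_const x) * C_const x + 1 + D_const x) * real \<delta> - D_const x"
  shows "graph_iso V E (Kab_verts \<delta> (n - \<delta>)) (Kab_edge \<delta> (n - \<delta>))
         \<or> indep_poly V E x < indep_poly (Kab_verts \<delta> (n - \<delta>)) (Kab_edge \<delta> (n - \<delta>)) x"
proof -
  note sg = assms(1) and cV = assms(2) and d1 = assms(3) and md = assms(4) and x0 = assms(5) and thr = assms(6)
  define C where "C = C_const x"
  define D where "D = D_const x"
  define cc where "cc = 2/x"
  define ee where "ee = 2/(x*(1+x))"
  define dd where "dd = real \<delta>"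
  have cpos: "cc > 0" unfolding cc_def using x0 by simp
  have epos: "ee > 0" unfolding ee_def using x0 by simp
  have Cb: "C - 1 \<ge> cc" unfolding C_def cc_def using C_bound[OF x0] .
  have Db: "- D \<ge> ee" unfolding D_def ee_def using D_bound[OF x0] .
  have dd1: "dd \<ge> 1" unfolding dd_def using d1 by simp
  have thr': "real n - dd \<ge> (C-1)*dd^2 + ((C-1)+1)*dd + (-D)*(C-1)*dd + (-D)"
  proof -
    have "(C-1)*dd^2 + ((1-D)*C + 1 + D)*dd - D - dd = (C-1)*dd^2 + ((C-1)+1)*dd + (-D)*(C-1)*dd + (-D)"
      by (simp add: algebra_simps)
    then show ?thesis using thr unfolding C_def D_def dd_def by linarith
  qed
  have t1: "(C-1)*dd^2 \<ge> cc*dd^2" using Cb by (intro mult_right_mono) auto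
  have t2: "((C-1)+1)*dd \<ge> (cc+1)*dd" using Cb dd1 by (intro mult_right_mono) auto
  have t3: "(-D)*(C-1)*dd \<ge> ee*cc*dd"
  proof -
    have "(-D)*(C-1) \<ge> ee*cc" using Cb Db cpos epos by (intro mult_mono) auto
    then show ?thesis using dd1 by (intro mult_right_mono) auto
  qed
  define T where "T = cc*dd^2 + (cc+1)*dd + ee*cc*dd + ee"
  have mlow: "real n - dd \<ge> T" unfolding T_def using thr' t1 t2 t3 Db by linarith
  have T1: "T > 1"
  proof -
    have "(cc+1)*dd \<ge> (cc+1)*1" using dd1 cpos by (intro mult_left_mono) auto
    then have "(cc+1)*dd \<ge> cc+1" by simp
    moreover have "cc*dd^2 \<ge> 0" "ee*cc*dd \<ge> 0" using cpos epos dd1 by auto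
    ultimately show ?thesis unfolding T_def using cpos epos by linarith
  qed
  define m where "m = n - \<delta>"
  have dn: "\<delta> < n" using mlow T1 unfolding dd_def by linarith
  have mr: "real m = real n - dd" unfolding m_def dd_def using dn by simp
  have m2: "m \<ge> 2" using mlow T1 mr by linarith
  have nm: "n = m + \<delta>" unfolding m_def using dn by simp
  have PK: "indep_poly (Kab_verts \<delta> m) (Kab_edge \<delta> m) x \<ge> (1+x)^m + (1+x)^\<delta> - 1"
    using K_lower x0 by simp
  show ?thesis
  proof (cases "\<exists>A. independent_set V E A \<and> card A \<ge> m")
    case True
    then obtain A where A: "independent_set V E A" "card A \<ge> n - \<delta>" unfolding m_def by blast
    have "n - \<delta> \<ge> 1" using m2 unfolding m_def by simp
    from case1[OF sg cV md x0 A this] PK show ?thesis unfolding m_def by auto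
  next
    case False
    then have small: "\<forall>S. independent_set V E S \<longrightarrow> card S < m" by (auto simp: not_le)
    show ?thesis
    proof (cases "\<forall>S. independent_set V E S \<longrightarrow> card S \<le> 1")
      case True
      have "indep_poly V E x < (1+x)^m + (1+x)^\<delta> - 1"
        using case2a[OF sg _ True x0 m2 d1] cV nm by simp
      then show ?thesis using PK unfolding m_def by simp
    next
      case False
      then obtain S where S: "independent_set V E S" "card S \<ge> 2" by (auto simp: not_le)
      have m3: "m \<ge> 3" using small S by fastforce
      define k where "k = m - 3"
      have mk: "m = k + 3" unfolding k_def using m3 by simp
      have cVk: "card V = k + 3 + \<delta>" using cV nm mk by simp
      have smallk: "\<forall>S. independent_set V E S \<longrightarrow> card S < k+3" using small mk by simp
      define p where "p = x/(1+x)"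
      have p0: "p > 0" "p < 1" unfolding p_def using x0 by auto
      have hR: "p^2*real (k+3) \<ge> 2*(1-p)*p*(real \<delta>)^2 + (2*(1-p)+p)*p*\<delta> + 4*(1-p)^3*\<delta> + 2*(1-p)^2*p"
      proof -
        have "p^2 * T = 2*(1-p)*p*(real \<delta>)^2 + (2*(1-p)+p)*p*\<delta> + 4*(1-p)^3*\<delta> + 2*(1-p)^2*p"
          unfolding T_def p_def cc_def ee_def dd_def using pT_ident[OF x0 refl, of "real \<delta>"]
          by (simp only: mult.commute)
        moreover have "p^2 * T \<le> p^2 * real (k+3)" using mlow mr mk by (intro mult_left_mono) auto
        ultimately show ?thesis by linarith
      qed
      have g: "2 + real (k+3)*(real (k+3)-1)*p^2 - 2*real (k+3)*p
            - real \<delta>*(real (k+3)-1)*(1-p^2) + 2*real \<delta>*(1-p) > 0"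
        using g_pos[OF p0 d1 _ hR] by simp
      have c: "(1+x)^\<delta> \<ge> 2 \<or> real (k+3) \<ge> 5"
      proof (cases "2 \<le> (1+x)^\<delta>")
        case True then show ?thesis by simp
      next
        case False
        then have lt: "(1+x)^\<delta> < 2" by simp
        have "(1+x)^1 \<le> (1+x)^\<delta>" using d1 x0 by (intro power_increasing) auto
        then have "1 + x \<le> (1+x)^\<delta>" by simp
        then have x1: "x < 1" using lt by simp
        have "cc > 2" unfolding cc_def using x0 x1 by (simp add: field_simps)
        moreover have "cc*dd^2 \<ge> cc" using dd1 cpos by (simp add: one_le_power)
        moreover have "(cc+1)*dd \<ge> cc+1"
        proof -
          have "(cc+1)*dd \<ge> (cc+1)*1" using dd1 cpos by (intro mult_left_mono) auto
          then show ?thesis by simp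
        qed
        moreover have "ee*cc*dd \<ge> 0" using cpos epos dd1 by simp
        ultimately have "T > 5" unfolding T_def using epos by linarith
        then have "real (k+3) \<ge> 5" using mlow mr mk by simp
        then show ?thesis by simp
      qed
      have "indep_poly V E x < (1+x)^(k+3) + (1+x)^\<delta> - 1"
        using case2b[OF sg cVk md smallk x0 d1 _ c] g unfolding p_def by simp
      then show ?thesis using PK mk unfolding m_def by simp
    qed
  qed
qed

end
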